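(* Let $V:\mathbb{R}^2\to[0,\infty)$ be Hölder continuous with compact support and $\int V=1$, and let $\tau>0$. For $\varepsilon\in(0,1)$ set $V^\varepsilon(x)=\varepsilon^{-2}V(x/\varepsilon)$ and $V_\varepsilon(x)=\varepsilon^{-2}|\log\varepsilon|^{-1}V(x/\varepsilon)$. For all sufficiently small $\varepsilon$ let $u^\varepsilon\in C^2(\mathbb{R}^2)$ be the unique function with $u^\varepsilon(x)=O(|\log|x||)$ as $|x|\to\infty$ satisfying $$u^\varepsilon(x)=\frac{\tau}{2\pi}\int_{\mathbb{R}^2}\log|x-y|\big[V_\varepsilon(y)u^\varepsilon(y)+V^\varepsilon(y)\big]dy,$$ and set $\Lambda_\varepsilon=\frac{\tau}{2\pi}\int_{\mathbb{R}^2}\big(V_\varepsilon u^\varepsilon+V^\varepsilon\big)dx$. Then $\Lambda_\varepsilon>0$ for all sufficiently small $\varepsilon$, and $\limsup_{\varepsilon\to0}\Lambda_\varepsilon\le1$.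
   Context: Existence and uniqueness of $u^\varepsilon$ for small $\varepsilon$ (in the class of $C^2$ functions with logarithmic growth) is part of the setting and is taken as given. *)

theory Defs
  imports "HOL-Analysis.Analysis" "HOL-Library.Landau_Symbols"
begin

definition holder_continuous :: "(real^2 \<Rightarrow> real) \<Rightarrow> bool" where
  "holder_continuous f \<longleftrightarrow>
     (\<exists>C \<alpha>. 0 < \<alpha> \<and> \<alpha> \<le> 1 \<and> (\<forall>x y. \<bar>f x - f y\<bar> \<le> C * dist x y powr \<alpha>))"

definition compact_support :: "(real^2 \<Rightarrow> real) \<Rightarrow> bool" where
  "compact_support f \<longleftrightarrow> compact (closure {x. f x \<noteq> 0})"

definition C2 :: "(real^2 \<Rightarrow> real) \<Rightarrow> bool" where
  "C2 f \<longleftrightarrow> (\<exists>Df :: real^2 \<Rightarrow> ((real^2) \<Rightarrow>\<^sub>L real).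
                \<exists>D2f :: real^2 \<Rightarrow> ((real^2) \<Rightarrow>\<^sub>L ((real^2) \<Rightarrow>\<^sub>L real)).
       (\<forall>x. (f has_derivative blinfun_apply (Df x)) (at x)) \<and>
       (\<forall>x. (Df has_derivative blinfun_apply (D2f x)) (at x)) \<and>
       continuous_on UNIV D2f)"

definition Vup :: "(real^2 \<Rightarrow> real) \<Rightarrow> real \<Rightarrow> real^2 \<Rightarrow> real" where
  "Vup V \<epsilon> x = V (x /\<^sub>R \<epsilon>) / \<epsilon>\<^sup>2"

definition Vlow :: "(real^2 \<Rightarrow> real) \<Rightarrow> real \<Rightarrow> real^2 \<Rightarrow> real" where
  "Vlow V \<epsilon> x = V (x /\<^sub>R \<epsilon>) / (\<epsilon>\<^sup>2 * \<bar>ln \<epsilon>\<bar>)"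

definition solves_eq :: "(real^2 \<Rightarrow> real) \<Rightarrow> real \<Rightarrow> real \<Rightarrow> (real^2 \<Rightarrow> real) \<Rightarrow> bool" where
  "solves_eq V \<tau> \<epsilon> w \<longleftrightarrow>
     (\<forall>x. w x = \<tau> / (2 * pi) *
        (\<integral>y. ln (norm (x - y)) * (Vlow V \<epsilon> y * w y + Vup V \<epsilon> y) \<partial>lborel))"

definition admissible :: "(real^2 \<Rightarrow> real) \<Rightarrow> bool" where
  "admissible w \<longleftrightarrow> C2 w \<and> w \<in> O[at_infinity](\<lambda>x. \<bar>ln (norm x)\<bar>)"

definition Lambda :: "(real^2 \<Rightarrow> real) \<Rightarrow> real \<Rightarrow> real \<Rightarrow> (real^2 \<Rightarrow> real) \<Rightarrow> real" where
  "Lambda V \<tau> \<epsilon> w = \<tau> / (2 * pi) * (\<integral>x. Vlow V \<epsilon> x * w x + Vup V \<epsilon> x \<partial>lborel)"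

end

theory Submission imports Defs begin

lemma nn_integral_affine_eu:
  fixes f :: "'a::euclidean_space \<Rightarrow> ennreal" and c :: real
  assumes [measurable]: "f \<in> borel_measurable borel" and c: "c \<noteq> 0"
  shows "(\<integral>\<^sup>+x. f x \<partial>lborel) = ennreal (\<bar>c\<bar>^DIM('a)) * (\<integral>\<^sup>+x. f (t + c *\<^sub>R x) \<partial>lborel)"
  by (subst lborel_affine[OF c, of t])
     (simp add: nn_integral_density nn_integral_distr nn_integral_cmult)

lemma integrable_affine_eu:
  fixes f :: "'a::euclidean_space \<Rightarrow> real"
  assumes f: "integrable lborel f" and c: "c \<noteq> 0"
  shows "integrable lborel (\<lambda>x. f (t + c *\<^sub>R x))"
  using f f[THEN borel_measurable_integrable] unfolding integrable_iff_bounded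
  by (subst (asm) nn_integral_affine_eu[where c=c and t=t]) (auto simp: ennreal_mult_less_top c)

lemma integrable_affine_eu_iff:
  fixes f :: "'a::euclidean_space \<Rightarrow> real"
  assumes c: "c \<noteq> 0"
  shows "integrable lborel (\<lambda>x. f (t + c *\<^sub>R x)) \<longleftrightarrow> integrable lborel f"
proof
  assume "integrable lborel (\<lambda>x. f (t + c *\<^sub>R x))"
  from integrable_affine_eu[OF this, of "1/c" "- t /\<^sub>R c"] c show "integrable lborel f"
    by (simp add: algebra_simps)
qed (use integrable_affine_eu c in auto)

lemma integral_affine_eu:
  fixes f :: "'a::euclidean_space \<Rightarrow> real" and c :: real
  assumes c: "c \<noteq> 0"
  shows "(\<integral>x. f x \<partial>lborel) = \<bar>c\<bar>^DIM('a) * (\<integral>x. f (t + c *\<^sub>R x) \<partial>lborel)"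
proof cases
  assume f[measurable]: "integrable lborel f" then show ?thesis
    using c f f[THEN borel_measurable_integrable] integrable_affine_eu[OF f c, of t]
    by (subst lborel_affine[OF c, of t])
       (simp add: integral_density integral_distr)
next
  assume "\<not> integrable lborel f" with c show ?thesis
    by (simp add: integrable_affine_eu_iff not_integrable_integral_eq)
qed

lemma emeasure_ball_scale2:
  assumes "r \<ge> 0"
  shows "emeasure lborel (ball (0::real^2) r) = ennreal (r^2) * emeasure lborel (ball (0::real^2) 1)"
  using emeasure_lebesgue_ball_conv_unit_ball[OF assms, of "0::real^2"] by simp

lemma ln_bound_pt:
  fixes w :: "real^2"
  assumes "r \<ge> 0"
  shows "ennreal (norm (indicator (cball 0 r) w * ln (norm w)))
     \<le> ennreal (ln (max r 1)) * indicator (cball 0 r) w + (\<Sum>k. indicator (ball 0 (exp (- real k))) w)"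
proof (cases "w \<in> cball 0 r")
  case False then show ?thesis by simp
next
  case True
  show ?thesis
  proof (cases "norm w \<ge> 1")
    case True2: True
    have "norm (indicator (cball 0 r) w * ln (norm w)) = ln (norm w)" using True True2 by simp
    also have "\<dots> \<le> ln (max r 1)" using True True2 by (auto intro!: ln_mono)
    finally have "ennreal (norm (indicator (cball 0 r) w * ln (norm w))) \<le> ennreal (ln (max r 1)) * indicator (cball 0 r) w"
      using True by (simp add: ennreal_leI)
    then show ?thesis by (simp add: add_increasing2)
  next
    case False2: False
    show ?thesis
    proof (cases "w = 0")
      case True then show ?thesis by simp
    next
      case False
      define N where "N = nat (ceiling (- ln (norm w)))"
      have nw: "0 < norm w" "norm w < 1" using False False2 by auto
      have "norm (indicator (cball 0 r) w * ln (norm w)) = - ln (norm w)" using True nw by simp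
      also have "\<dots> \<le> real N" unfolding N_def by linarith
      finally have 1: "ennreal (norm (indicator (cball 0 r) w * ln (norm w))) \<le> ennreal (real N)"
        by (rule ennreal_leI)
      have "ennreal (real N) = (\<Sum>k<N. indicator (ball 0 (exp (- real k))) w)"
      proof -
        have "\<And>k. k < N \<Longrightarrow> w \<in> ball 0 (exp (- real k))"
        proof -
          fix k assume "k < N"
          then have "real k < - ln (norm w)" unfolding N_def by linarith
          then have "ln (norm w) < - real k" by simp
          then have "norm w < exp (- real k)" using nw by (metis exp_less_mono exp_ln)
          then show "w \<in> ball 0 (exp (- real k))" by simp
        qed
        then show ?thesis by (simp add: ennreal_of_nat_eq_real_of_nat)
      qed
      also have "\<dots> \<le> (\<Sum>k. indicator (ball 0 (exp (- real k))) w)"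
        by (rule sum_le_suminf) auto
      finally show ?thesis using 1 by (meson add_increasing order_trans zero_le)
    qed
  qed
qed

lemma ln_integrable_cball:
  assumes r: "r \<ge> 0"
  shows "integrable lborel (\<lambda>w::real^2. indicator (cball 0 r) w * ln (norm w))"
proof (rule integrableI_bounded)
  show "(\<lambda>w::real^2. indicator (cball 0 r) w * ln (norm w)) \<in> borel_measurable lborel"
    by (intro borel_measurable_times borel_measurable_indicator borel_measurable_ln borel_measurable_norm) auto
  define B where "B = emeasure lborel (ball (0::real^2) 1)"
  have Bfin: "B < \<infinity>" unfolding B_def by (rule emeasure_lborel_ball_finite)
  have eq: "\<And>k::nat. exp (- real k) ^ 2 = exp (-2) ^ k"
    by (metis exp_of_nat_mult mult.commute mult_minus_right of_nat_numeral power_mult)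
  have sg: "summable (\<lambda>k::nat. exp (- real k) ^ 2)" unfolding eq by (rule summable_geometric) simp
  have "(\<integral>\<^sup>+w. ennreal (norm (indicator (cball (0::real^2) r) w * ln (norm w))) \<partial>lborel)
     \<le> (\<integral>\<^sup>+w. ennreal (ln (max r 1)) * indicator (cball (0::real^2) r) w + (\<Sum>k. indicator (ball (0::real^2) (exp (- real k))) w) \<partial>lborel)"
    using ln_bound_pt[OF r] by (intro nn_integral_mono) blast
  also have "\<dots> = ennreal (ln (max r 1)) * emeasure lborel (cball (0::real^2) r)
       + (\<Sum>k. emeasure lborel (ball (0::real^2) (exp (- real k))))"
  proof -
    have m1: "(\<lambda>w::real^2. ennreal (ln (max r 1)) * indicator (cball 0 r) w) \<in> borel_measurable lborel"
      by (intro borel_measurable_times_ennreal borel_measurable_indicator) auto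
    have m2: "\<And>k. (\<lambda>w::real^2. indicator (ball 0 (exp (- real k))) w :: ennreal) \<in> borel_measurable lborel"
      by (intro borel_measurable_indicator) auto
    have m3: "(\<lambda>w::real^2. (\<Sum>k. indicator (ball 0 (exp (- real k))) w :: ennreal)) \<in> borel_measurable lborel"
      using m2 by (intro borel_measurable_suminf_order) auto
    have e2: "(\<integral>\<^sup>+w. (\<Sum>k. indicator (ball (0::real^2) (exp (- real k))) w) \<partial>lborel) = (\<Sum>k. emeasure lborel (ball (0::real^2) (exp (- real k))))"
      using m2 by (subst nn_integral_suminf) auto
    show ?thesis using m1 m3 e2 by (subst nn_integral_add) (auto simp: nn_integral_cmult_indicator)
  qed
  also have "(\<Sum>k. emeasure lborel (ball (0::real^2) (exp (- real k)))) = (\<Sum>k. ennreal (exp (- real k) ^ 2) * B)"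
    unfolding B_def by (subst emeasure_ball_scale2) auto
  also have "\<dots> = (\<Sum>k. ennreal (exp (- real k) ^ 2)) * B"
    by (rule ennreal_suminf_multc)
  also have "(\<Sum>k. ennreal (exp (- real k) ^ 2)) = ennreal (\<Sum>k. exp (- real k) ^ 2)"
    using sg by (intro suminf_ennreal2) auto
  finally show "(\<integral>\<^sup>+w. ennreal (norm (indicator (cball (0::real^2) r) w * ln (norm w))) \<partial>lborel) < \<infinity>"
    using Bfin emeasure_compact_finite[of "cball (0::real^2) r"]
    by (simp add: ennreal_mult_less_top order_le_less_trans)
qed

lemma KL:
  fixes z :: "real^2"
  assumes R: "R \<ge> 0" and z: "norm z \<le> R"
  shows "integrable lborel (\<lambda>y. ln (norm (z - y)) * indicator (cball 0 R) y)"
    and "integrable lborel (\<lambda>y. \<bar>ln (norm (z - y))\<bar> * indicator (cball 0 R) y)"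
    and "(\<integral>y. \<bar>ln (norm (z - y))\<bar> * indicator (cball 0 R) y \<partial>lborel)
          \<le> (\<integral>w. \<bar>indicator (cball (0::real^2) (2*R)) w * ln (norm w)\<bar> \<partial>lborel)"
proof -
  define G where "G = (\<lambda>w::real^2. indicator (cball 0 (2*R)) w * ln (norm w))"
  have G: "integrable lborel G" unfolding G_def using R by (intro ln_integrable_cball) simp
  have Gt: "integrable lborel (\<lambda>y. G (z + (-1) *\<^sub>R y))" by (rule integrable_affine_eu[OF G]) simp
  have Gt': "integrable lborel (\<lambda>y. G (z - y))" using Gt by simp
  have eq: "\<And>y. ln (norm (z - y)) * indicator (cball 0 R) y = G (z - y) * indicator (cball 0 R) y"
  proof -
    fix y :: "real^2"
    show "ln (norm (z - y)) * indicator (cball 0 R) y = G (z - y) * indicator (cball 0 R) y"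
    proof (cases "y \<in> cball 0 R")
      case True
      then have "norm (z - y) \<le> 2 * R" using z norm_triangle_ineq4[of z y] by simp
      then show ?thesis using True by (simp add: G_def)
    qed simp
  qed
  show i1: "integrable lborel (\<lambda>y. ln (norm (z - y)) * indicator (cball 0 R) y)"
    unfolding eq by (rule integrable_real_mult_indicator[OF _ Gt']) simp
  show i2: "integrable lborel (\<lambda>y. \<bar>ln (norm (z - y))\<bar> * indicator (cball 0 R) y)"
    using integrable_abs[OF i1] by (simp add: abs_mult)
  have "(\<integral>y. \<bar>ln (norm (z - y))\<bar> * indicator (cball 0 R) y \<partial>lborel) \<le> (\<integral>y. \<bar>G (z - y)\<bar> \<partial>lborel)"
    using i2 integrable_abs[OF Gt'] eq
    by (intro integral_mono) (auto simp: indicator_def abs_mult split: if_splits)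
  also have "\<dots> = (\<integral>y. \<bar>G (z + (-1) *\<^sub>R y)\<bar> \<partial>lborel)" by simp
  also have "\<dots> = (\<integral>w. \<bar>G w\<bar> \<partial>lborel)"
    using integral_affine_eu[of "-1" "\<lambda>w. \<bar>G w\<bar>" z] by simp
  finally show "(\<integral>y. \<bar>ln (norm (z - y))\<bar> * indicator (cball 0 R) y \<partial>lborel)
          \<le> (\<integral>w. \<bar>indicator (cball (0::real^2) (2*R)) w * ln (norm w)\<bar> \<partial>lborel)"
    unfolding G_def .
qed

lemma main_est:
  fixes V :: "real^2 \<Rightarrow> real" and u :: "real^2 \<Rightarrow> real"
  assumes Vnn: "\<forall>x. V x \<ge> 0" and Vc: "continuous_on UNIV V" and R: "R > 0"
    and Vsupp: "\<forall>x. x \<notin> cball 0 R \<longrightarrow> V x = 0" and Vm: "\<forall>x. V x \<le> Vm"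
    and Vint: "(\<integral>x. V x \<partial>lborel) = 1"
    and KI: "\<And>z::real^2. norm z \<le> R \<Longrightarrow> integrable lborel (\<lambda>y. \<bar>ln (norm (z - y))\<bar> * indicator (cball 0 R) y)"
    and Kb: "\<And>z::real^2. norm z \<le> R \<Longrightarrow> (\<integral>y. \<bar>ln (norm (z - y))\<bar> * indicator (cball 0 R) y \<partial>lborel) \<le> K"
    and a_def: "a = \<tau> / (2 * pi)" and a: "a > 0" and e: "0 < \<epsilon>" "\<epsilon> < 1"
    and uc: "continuous_on UNIV u"
    and usol: "\<forall>x. u x = a * (\<integral>y. ln (norm (x - y)) * (Vlow V \<epsilon> y * u y + Vup V \<epsilon> y) \<partial>lborel)"
    and L: "L = - ln \<epsilon>" and big: "2 * (a * Vm * K) \<le> L"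
  shows "\<bar>Lambda V \<tau> \<epsilon> u * (1 + a) - a\<bar> \<le> 2 * a^2 * Vm * K * (\<bar>Lambda V \<tau> \<epsilon> u\<bar> + 1) / L"
proof -
  define \<Lambda> where "\<Lambda> = Lambda V \<tau> \<epsilon> u"
  define B where "B = cball (0::real^2) R"
  have Lpos: "L > 0" using e L by simp
  have absln: "\<bar>ln \<epsilon>\<bar> = L" using e L by simp
  define f where "f = (\<lambda>y. Vlow V \<epsilon> y * u y + Vup V \<epsilon> y)"
  define v where "v = (\<lambda>z. u (\<epsilon> *\<^sub>R z))"
  define h where "h = (\<lambda>z. V z * (v z / L + 1))"
  have hf: "\<And>z. \<epsilon>^2 * f (\<epsilon> *\<^sub>R z) = h z"
    using e Lpos by (simp add: f_def h_def v_def Vlow_def Vup_def absln field_simps)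
  have vc: "continuous_on UNIV v" unfolding v_def
    by (rule continuous_on_compose2[OF uc]) (auto intro!: continuous_intros)
  have hc: "continuous_on UNIV h" unfolding h_def using vc Vc Lpos
    by (auto intro!: continuous_intros)
  have hmeas[measurable]: "h \<in> borel_measurable borel" using hc by (rule borel_measurable_continuous_onI)
  have Vmeas[measurable]: "V \<in> borel_measurable borel" using Vc by (rule borel_measurable_continuous_onI)
  have hsupp: "\<And>z. z \<notin> B \<Longrightarrow> h z = 0" using Vsupp by (simp add: h_def B_def)
  have hint: "integrable lborel h"
  proof -
    have "integrable lborel (\<lambda>x. indicator B x *\<^sub>R h x)"
      unfolding B_def by (rule borel_integrable_compact) (auto intro: continuous_on_subset[OF hc])
    also have "(\<lambda>x. indicator B x *\<^sub>R h x) = h"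
      by (rule ext) (metis hsupp indicator_simps mult_cancel_right1 mult_zero_left real_scaleR_def)
    finally show ?thesis .
  qed
  have Vint': "integrable lborel V" using Vint not_integrable_integral_eq by fastforce
  have hL: "\<Lambda> = a * (\<integral>z. h z \<partial>lborel)"
  proof -
    have "\<Lambda> = a * (\<integral>y. f y \<partial>lborel)" unfolding \<Lambda>_def Lambda_def a_def f_def ..
    also have "(\<integral>y. f y \<partial>lborel) = \<bar>\<epsilon>\<bar>^DIM(real^2) * (\<integral>z. f (0 + \<epsilon> *\<^sub>R z) \<partial>lborel)"
      using e by (intro integral_affine_eu) simp
    also have "\<dots> = (\<integral>z. \<epsilon>^2 * f (\<epsilon> *\<^sub>R z) \<partial>lborel)" using e by simp
    also have "\<dots> = (\<integral>z. h z \<partial>lborel)" using hf by simp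
    finally show ?thesis .
  qed
  obtain Mv where Mv: "\<And>z. z \<in> B \<Longrightarrow> \<bar>v z\<bar> \<le> Mv"
  proof -
    have "compact B" unfolding B_def by simp
    have "B \<noteq> {}" unfolding B_def using R by auto
    have "continuous_on B (\<lambda>z. \<bar>v z\<bar>)" using vc by (auto intro!: continuous_intros intro: continuous_on_subset)
    from continuous_attains_sup[OF \<open>compact B\<close> \<open>B \<noteq> {}\<close> this] that show ?thesis by blast
  qed
  define wz where "wz = (\<lambda>z. a * (\<integral>y. ln (norm (z - y)) * h y \<partial>lborel))"
  have Vm0: "Vm \<ge> 0" using Vm Vnn by (meson order_trans)
  define Hm where "Hm = Vm * (Mv / L + 1)"
  have Mv0: "Mv \<ge> 0" using Mv[of 0] R by (auto simp: B_def)
  have Hm0: "Hm \<ge> 0" unfolding Hm_def using Mv0 Vm0 Lpos by simp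
  have habs: "\<And>y. \<bar>h y\<bar> \<le> Hm * indicator B y"
  proof -
    fix y
    show "\<bar>h y\<bar> \<le> Hm * indicator B y"
    proof (cases "y \<in> B")
      case True
      have "\<bar>h y\<bar> = V y * \<bar>v y / L + 1\<bar>" using Vnn by (simp add: h_def abs_mult)
      also have "\<dots> \<le> V y * (\<bar>v y\<bar> / L + 1)" using Vnn Lpos
        by (intro mult_left_mono) (auto simp: abs_triangle_ineq[THEN order_trans])
      also have "\<dots> \<le> Vm * (Mv / L + 1)" using Vnn Lpos Vm Mv[OF True] Vm0
        by (intro mult_mono add_mono divide_right_mono) auto
      finally show ?thesis using True by (simp add: Hm_def)
    qed (simp add: hsupp)
  qed
  have lnint: "\<And>z. z \<in> B \<Longrightarrow> integrable lborel (\<lambda>y. ln (norm (z - y)) * h y)"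
  proof -
    fix z assume z: "z \<in> B"
    show "integrable lborel (\<lambda>y. ln (norm (z - y)) * h y)"
    proof (rule Bochner_Integration.integrable_bound[where f="\<lambda>y. Hm * (\<bar>ln (norm (z - y))\<bar> * indicator (cball 0 R) y)"])
      show "integrable lborel (\<lambda>y. Hm * (\<bar>ln (norm (z - y))\<bar> * indicator (cball 0 R) y))"
        using KI[of z] z by (intro integrable_mult_right) (auto simp: B_def)
      show "(\<lambda>y. ln (norm (z - y)) * h y) \<in> borel_measurable lborel" by measurable
      show "AE y in lborel. norm (ln (norm (z - y)) * h y) \<le> norm (Hm * (\<bar>ln (norm (z - y))\<bar> * indicator (cball 0 R) y))"
      proof (rule AE_I2)
        fix y
        have "\<bar>ln (norm (z - y))\<bar> * \<bar>h y\<bar> \<le> \<bar>ln (norm (z - y))\<bar> * (Hm * indicator B y)"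
          using habs by (intro mult_left_mono) auto
        then show "norm (ln (norm (z - y)) * h y) \<le> norm (Hm * (\<bar>ln (norm (z - y))\<bar> * indicator (cball 0 R) y))"
          using Hm0 by (simp add: abs_mult B_def mult.assoc mult.left_commute)
      qed
    qed
  qed
  have hv: "\<And>z. z \<in> B \<Longrightarrow> v z = - L * \<Lambda> + wz z"
  proof -
    fix z assume z: "z \<in> B"
    have "v z = a * (\<integral>y. ln (norm (\<epsilon> *\<^sub>R z - y)) * f y \<partial>lborel)"
      unfolding v_def f_def by (rule usol[rule_format])
    also have "(\<integral>y. ln (norm (\<epsilon> *\<^sub>R z - y)) * f y \<partial>lborel)
       = \<bar>\<epsilon>\<bar>^DIM(real^2) * (\<integral>y. ln (norm (\<epsilon> *\<^sub>R z - (0 + \<epsilon> *\<^sub>R y))) * f (0 + \<epsilon> *\<^sub>R y) \<partial>lborel)"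
      using e by (intro integral_affine_eu) simp
    also have "\<dots> = (\<integral>y. ln (norm (\<epsilon> *\<^sub>R z - \<epsilon> *\<^sub>R y)) * h y \<partial>lborel)"
    proof -
      have "\<And>y. ln (norm (\<epsilon> *\<^sub>R z - \<epsilon> *\<^sub>R y)) * h y = \<epsilon>^2 * (ln (norm (\<epsilon> *\<^sub>R z - \<epsilon> *\<^sub>R y)) * f (\<epsilon> *\<^sub>R y))"
        by (simp add: hf[symmetric] mult_ac)
      then have eqf: "(\<lambda>y. ln (norm (\<epsilon> *\<^sub>R z - \<epsilon> *\<^sub>R y)) * h y) = (\<lambda>y. \<epsilon>^2 * (ln (norm (\<epsilon> *\<^sub>R z - \<epsilon> *\<^sub>R y)) * f (\<epsilon> *\<^sub>R y)))"
        by (rule ext)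
      show ?thesis unfolding eqf integral_mult_right_zero using e by simp
    qed
    also have "\<dots> = (\<integral>y. - L * h y + ln (norm (z - y)) * h y \<partial>lborel)"
    proof (rule integral_cong_AE)
      show "(\<lambda>y. ln (norm (\<epsilon> *\<^sub>R z - \<epsilon> *\<^sub>R y)) * h y) \<in> borel_measurable lborel" by measurable
      show "(\<lambda>y. - L * h y + ln (norm (z - y)) * h y) \<in> borel_measurable lborel" by measurable
      show "AE y in lborel. ln (norm (\<epsilon> *\<^sub>R z - \<epsilon> *\<^sub>R y)) * h y = - L * h y + ln (norm (z - y)) * h y"
        using AE_lborel_singleton[of z]
      proof (rule AE_mp, intro AE_I2 impI)
        fix y assume "y \<noteq> z"
        then have "norm (z - y) > 0" by simp
        moreover have "norm (\<epsilon> *\<^sub>R z - \<epsilon> *\<^sub>R y) = \<epsilon> * norm (z - y)"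
          using e by (simp add: scaleR_right_diff_distrib[symmetric])
        ultimately have "ln (norm (\<epsilon> *\<^sub>R z - \<epsilon> *\<^sub>R y)) = - L + ln (norm (z - y))"
          using e L by (simp add: ln_mult)
        then show "ln (norm (\<epsilon> *\<^sub>R z - \<epsilon> *\<^sub>R y)) * h y = - L * h y + ln (norm (z - y)) * h y"
          by (simp add: algebra_simps) (metis distrib_left mult.commute)
      qed
    qed
    also have "\<dots> = - L * (\<integral>y. h y \<partial>lborel) + (\<integral>y. ln (norm (z - y)) * h y \<partial>lborel)"
      using hint lnint[OF z] by simp
    finally show "v z = - L * \<Lambda> + wz z" by (simp add: hL wz_def algebra_simps)
  qed
  have Bne: "0 \<in> B" unfolding B_def using R by simp
  have wzv: "\<And>z. z \<in> B \<Longrightarrow> wz z = v z + L * \<Lambda>" using hv by simp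
  define W where "W = Sup ((\<lambda>z. \<bar>wz z\<bar>) ` B)"
  have bdd: "bdd_above ((\<lambda>z. \<bar>wz z\<bar>) ` B)"
  proof (rule bdd_aboveI2)
    fix z assume z: "z \<in> B"
    show "\<bar>wz z\<bar> \<le> Mv + L * \<bar>\<Lambda>\<bar>" using wzv[OF z] Mv[OF z] Lpos abs_triangle_ineq[of "v z" "L * \<Lambda>"]
      by (simp add: abs_mult)
  qed
  have Wub: "\<And>z. z \<in> B \<Longrightarrow> \<bar>wz z\<bar> \<le> W" unfolding W_def using bdd by (intro cSup_upper) auto
  have W0: "W \<ge> 0" using Wub[OF Bne] by simp
  define Q where "Q = \<bar>\<Lambda>\<bar> + W / L + 1"
  have hQ: "\<And>y. \<bar>h y\<bar> \<le> Vm * Q * indicator B y"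
  proof -
    fix y
    show "\<bar>h y\<bar> \<le> Vm * Q * indicator B y"
    proof (cases "y \<in> B")
      case True
      have "\<bar>v y\<bar> \<le> L * \<bar>\<Lambda>\<bar> + W" using hv[OF True] Wub[OF True] Lpos abs_triangle_ineq[of "- L * \<Lambda>" "wz y"]
        by (simp add: abs_mult)
      then have vy: "\<bar>v y\<bar> / L \<le> \<bar>\<Lambda>\<bar> + W / L" using Lpos by (simp add: field_simps)
      have "\<bar>h y\<bar> = V y * \<bar>v y / L + 1\<bar>" using Vnn by (simp add: h_def abs_mult)
      also have "\<dots> \<le> V y * (\<bar>v y\<bar> / L + 1)" using Vnn Lpos
        by (intro mult_left_mono) (auto simp: abs_triangle_ineq[THEN order_trans])
      also have "\<dots> \<le> Vm * Q" unfolding Q_def using Vnn Lpos Vm vy Vm0 W0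
        by (intro mult_mono) auto
      finally show ?thesis using True by simp
    qed (simp add: hsupp)
  qed
  have K0: "K \<ge> 0"
  proof -
    have "0 \<le> (\<integral>y. \<bar>ln (norm ((0::real^2) - y))\<bar> * indicator (cball 0 R) y \<partial>lborel)"
      by (rule Bochner_Integration.integral_nonneg) simp
    from order_trans[OF this Kb[of 0]] R show ?thesis by simp
  qed
  have Q0: "Q \<ge> 0" unfolding Q_def using W0 Lpos by simp
  have wzb: "\<And>z. z \<in> B \<Longrightarrow> \<bar>wz z\<bar> \<le> a * Vm * K * Q"
  proof -
    fix z assume z: "z \<in> B"
    have zR: "norm z \<le> R" using z by (simp add: B_def)
    have "\<bar>(\<integral>y. ln (norm (z - y)) * h y \<partial>lborel)\<bar> \<le> (\<integral>y. (Vm * Q) * (\<bar>ln (norm (z - y))\<bar> * indicator (cball 0 R) y) \<partial>lborel)"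
    proof (rule integral_abs_bound_integral)
      show "integrable lborel (\<lambda>y. ln (norm (z - y)) * h y)" by (rule lnint[OF z])
      show "integrable lborel (\<lambda>y. (Vm * Q) * (\<bar>ln (norm (z - y))\<bar> * indicator (cball 0 R) y))"
        using KI[OF zR] by (rule integrable_mult_right)
      fix y
      have "\<bar>ln (norm (z - y))\<bar> * \<bar>h y\<bar> \<le> \<bar>ln (norm (z - y))\<bar> * (Vm * Q * indicator B y)"
        using hQ by (intro mult_left_mono) auto
      then show "\<bar>ln (norm (z - y)) * h y\<bar> \<le> (Vm * Q) * (\<bar>ln (norm (z - y))\<bar> * indicator (cball 0 R) y)"
        by (simp add: abs_mult B_def mult.assoc mult.left_commute)
    qed
    also have "\<dots> = Vm * Q * (\<integral>y. \<bar>ln (norm (z - y))\<bar> * indicator (cball 0 R) y \<partial>lborel)" by simp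
    also have "\<dots> \<le> Vm * Q * K" using Kb[OF zR] Vm0 Q0 by (intro mult_left_mono) auto
    finally show "\<bar>wz z\<bar> \<le> a * Vm * K * Q" using a by (simp add: wz_def abs_mult mult_ac mult_left_mono)
  qed
  define C where "C = a * Vm * K"
  have C0: "C \<ge> 0" unfolding C_def using a Vm0 K0 by simp
  have WB: "W \<le> C * Q" unfolding W_def C_def
    using wzb Bne by (intro cSup_least) auto
  have CL: "C / L \<le> 1/2" using big Lpos unfolding C_def by (simp add: field_simps)
  have "C * Q = C * (\<bar>\<Lambda>\<bar> + 1) + (C / L) * W" unfolding Q_def by (simp add: field_simps)
  also have "(C / L) * W \<le> (1/2) * W" using CL W0 by (intro mult_right_mono) auto
  finally have W2: "W \<le> 2 * C * (\<bar>\<Lambda>\<bar> + 1)" using WB by simp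
  have eqI: "(\<integral>y. h y \<partial>lborel) - 1 + \<Lambda> = (\<integral>y. h y - V y + \<Lambda> * V y \<partial>lborel)"
    using hint Vint' Vint by simp
  have "\<bar>\<integral>y. h y - V y + \<Lambda> * V y \<partial>lborel\<bar> \<le> (\<integral>y. V y * (W / L) \<partial>lborel)"
  proof (rule integral_abs_bound_integral)
    show "integrable lborel (\<lambda>y. h y - V y + \<Lambda> * V y)" using hint Vint' by auto
    show "integrable lborel (\<lambda>y. V y * (W / L))" using Vint' by auto
    fix y
    show "\<bar>h y - V y + \<Lambda> * V y\<bar> \<le> V y * (W / L)"
    proof (cases "y \<in> B")
      case True
      have "h y - V y + \<Lambda> * V y = V y * (wz y / L)"
        using wzv[OF True] Lpos by (simp add: h_def field_simps)
      then have "\<bar>h y - V y + \<Lambda> * V y\<bar> = V y * (\<bar>wz y\<bar> / L)" using Vnn Lpos by (simp add: abs_mult)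
      also have "\<dots> \<le> V y * (W / L)" using Wub[OF True] Vnn Lpos
        by (intro mult_left_mono divide_right_mono) auto
      finally show ?thesis .
    next
      case False
      then show ?thesis using hsupp[OF False] Vsupp by (simp add: B_def)
    qed
  qed
  also have "\<dots> = W / L" using Vint by simp
  finally have th: "\<bar>(\<integral>y. h y \<partial>lborel) - 1 + \<Lambda>\<bar> \<le> W / L" using eqI by simp
  have "\<Lambda> * (1 + a) - a = a * ((\<integral>y. h y \<partial>lborel) - 1 + \<Lambda>)" using hL by (simp add: algebra_simps)
  then have "\<bar>\<Lambda> * (1 + a) - a\<bar> \<le> a * (W / L)" using mult_left_mono[OF th, of a] a by (simp add: abs_mult)
  also have "\<dots> \<le> a * (2 * C * (\<bar>\<Lambda>\<bar> + 1) / L)" using W2 a Lpos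
    by (intro mult_left_mono divide_right_mono) auto
  also have "\<dots> = 2 * a^2 * Vm * K * (\<bar>\<Lambda>\<bar> + 1) / L" unfolding C_def by (simp add: power2_eq_square)
  finally show ?thesis unfolding \<Lambda>_def .
qed


lemma alg:
  fixes \<Lambda> a \<delta> :: real
  assumes h: "\<bar>\<Lambda> * (1 + a) - a\<bar> \<le> \<delta> * (\<bar>\<Lambda>\<bar> + 1)"
    and a: "a > 0" and d0: "\<delta> \<ge> 0" and d1: "\<delta> \<le> a / 2" and d2: "\<delta> \<le> 1/2"
  shows "0 < \<Lambda> \<and> \<Lambda> \<le> 1"
proof (intro conjI)
  show "0 < \<Lambda>"
  proof (rule ccontr)
    assume "\<not> 0 < \<Lambda>"
    then have L0: "\<Lambda> \<le> 0" by simp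
    have "a - \<Lambda> * (1 + a) \<le> \<delta> * (1 - \<Lambda>)" using h L0 by (simp add: abs_if split: if_splits)
    then have "a \<le> \<delta> + \<Lambda> * (1 + a - \<delta>)" by (simp add: algebra_simps)
    moreover have "\<Lambda> * (1 + a - \<delta>) \<le> 0" using L0 a d2 by (intro mult_nonpos_nonneg) auto
    ultimately show False using d1 a by linarith
  qed
  show "\<Lambda> \<le> 1"
  proof (rule ccontr)
    assume "\<not> \<Lambda> \<le> 1"
    then have L1: "\<Lambda> > 1" by simp
    have "\<Lambda> * (1 + a) - a \<le> \<delta> * (\<Lambda> + 1)" using h L1 by (simp add: abs_if split: if_splits)
    then have "\<Lambda> * (1 + a - \<delta>) \<le> a + \<delta>" by (simp add: algebra_simps)
    moreover have "\<Lambda> * (1 + a - \<delta>) > 1 * (1 + a - \<delta>)" using L1 a d2 by (intro mult_strict_right_mono) auto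
    ultimately have "1 + a - \<delta> < a + \<delta>" by simp
    then show False using d2 by linarith
  qed
qed

lemma holder_cont:
  assumes "holder_continuous V"
  shows "continuous_on UNIV V"
proof -
  obtain C \<alpha> where \<alpha>: "0 < \<alpha>" and H: "\<And>x y. \<bar>V x - V y\<bar> \<le> C * dist x y powr \<alpha>"
    using assms unfolding holder_continuous_def by blast
  have "isCont V x" for x
  proof -
    have d: "((\<lambda>y. dist y x) \<longlongrightarrow> 0) (at x)"
      using tendsto_dist[OF tendsto_ident_at tendsto_const, of x x] by simp
    have "((\<lambda>y. C * dist y x powr \<alpha>) \<longlongrightarrow> C * 0) (at x)"
    proof -
      have p: "((\<lambda>y. dist y x powr \<alpha>) \<longlongrightarrow> 0) (at x)"
        by (rule tendsto_zero_powrI[OF d tendsto_const]) (simp_all add: \<alpha>)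
      show ?thesis by (rule tendsto_mult[OF tendsto_const p])
    qed
    have "((\<lambda>y. V y - V x) \<longlongrightarrow> 0) (at x)"
    proof (rule Lim_null_comparison[where g="\<lambda>y. C * dist y x powr \<alpha>"])
      show "\<forall>\<^sub>F y in at x. norm (V y - V x) \<le> C * dist y x powr \<alpha>"
        by (rule always_eventually) (simp add: H[of _ x])
    qed (use \<open>((\<lambda>y. C * dist y x powr \<alpha>) \<longlongrightarrow> C * 0) (at x)\<close> in simp)
    then show ?thesis unfolding isCont_def by (rule LIM_zero_cancel)
  qed
  then show ?thesis by (intro continuous_at_imp_continuous_on) auto
qed

lemma C2_cont:
  assumes "C2 f" shows "continuous_on UNIV f"
proof -
  obtain Df :: "real^2 \<Rightarrow> ((real^2) \<Rightarrow>\<^sub>L real)" where "\<forall>x. (f has_derivative blinfun_apply (Df x)) (at x)"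
    using assms unfolding C2_def by blast
  then show ?thesis
    by (intro continuous_at_imp_continuous_on) (auto intro: has_derivative_continuous)
qed

theorem lemma3p1:
  fixes V :: "real^2 \<Rightarrow> real" and \<tau> :: real and u :: "real \<Rightarrow> real^2 \<Rightarrow> real"
  assumes V_nonneg: "\<forall>x. V x \<ge> 0"
    and V_holder: "holder_continuous V"
    and V_supp: "compact_support V"
    and V_int: "(\<integral>x. V x \<partial>lborel) = 1"
    and tau_pos: "\<tau> > 0"
    and u_sol: "\<forall>\<^sub>F \<epsilon> in at_right 0.
                  admissible (u \<epsilon>) \<and> solves_eq V \<tau> \<epsilon> (u \<epsilon>) \<and>
                  (\<forall>w. admissible w \<and> solves_eq V \<tau> \<epsilon> w \<longrightarrow> w = u \<epsilon>)"
  shows "(\<forall>\<^sub>F \<epsilon> in at_right 0. Lambda V \<tau> \<epsilon> (u \<epsilon>) > 0) \<and>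
         Limsup (at_right 0) (\<lambda>\<epsilon>. ereal (Lambda V \<tau> \<epsilon> (u \<epsilon>))) \<le> 1"
proof -
  define a where "a = \<tau> / (2 * pi)"
  have a: "a > 0" unfolding a_def using tau_pos by simp
  have Vc: "continuous_on UNIV V" by (rule holder_cont[OF V_holder])
  obtain R where R: "R > 0" and RS: "\<And>x. x \<in> closure {x. V x \<noteq> 0} \<Longrightarrow> norm x \<le> R"
    using V_supp unfolding compact_support_def
    by (metis compact_imp_bounded bounded_pos)
  have Vsupp: "\<forall>x. x \<notin> cball 0 R \<longrightarrow> V x = 0"
  proof (intro allI impI)
    fix x :: "real^2" assume "x \<notin> cball 0 R"
    then have "norm x > R" by simp
    then have "x \<notin> closure {x. V x \<noteq> 0}" using RS[of x] by linarith
    then have "x \<notin> {x. V x \<noteq> 0}" using closure_subset[of "{x. V x \<noteq> 0}"] by blast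
    then show "V x = 0" by simp
  qed
  obtain Vm where Vm': "\<And>x. x \<in> cball (0::real^2) R \<Longrightarrow> V x \<le> Vm"
  proof -
    have "cball (0::real^2) R \<noteq> {}" using R by simp
    from continuous_attains_sup[OF compact_cball this continuous_on_subset[OF Vc]] that show ?thesis by blast
  qed
  have Vm0: "Vm \<ge> 0" using Vm'[of 0] V_nonneg R by (meson centre_in_cball less_imp_le order_trans)
  have Vm: "\<forall>x. V x \<le> Vm"
  proof
    fix x :: "real^2"
    show "V x \<le> Vm" by (cases "x \<in> cball 0 R") (use Vm' Vsupp Vm0 in auto)
  qed
  define K where "K = (\<integral>w. \<bar>indicator (cball (0::real^2) (2*R)) w * ln (norm w)\<bar> \<partial>lborel)"
  have KI: "\<And>z::real^2. norm z \<le> R \<Longrightarrow> integrable lborel (\<lambda>y. \<bar>ln (norm (z - y))\<bar> * indicator (cball 0 R) y)"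
    using KL(2) R by simp
  have Kb: "\<And>z::real^2. norm z \<le> R \<Longrightarrow> (\<integral>y. \<bar>ln (norm (z - y))\<bar> * indicator (cball 0 R) y \<partial>lborel) \<le> K"
    unfolding K_def using KL(3) R by simp
  define X where "X = a * Vm * K"
  define Y where "Y = a^2 * Vm * K"
  define T where "T = 1 + 6 * X + 4 * Y"
  have ev1: "\<forall>\<^sub>F \<epsilon> in at_right 0. ln \<epsilon> < - T"
    using ln_at_0 unfolding filterlim_at_bot_dense by blast
  have ev2: "\<forall>\<^sub>F \<epsilon> in at_right (0::real). 0 < \<epsilon> \<and> \<epsilon> < 1"
    by (simp add: eventually_at_right_less eventually_at_right_field) (auto intro: exI[of _ 1])
  have main: "\<forall>\<^sub>F \<epsilon> in at_right 0. 0 < Lambda V \<tau> \<epsilon> (u \<epsilon>) \<and> Lambda V \<tau> \<epsilon> (u \<epsilon>) \<le> 1"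
    using u_sol ev1 ev2
  proof eventually_elim
    case (elim \<epsilon>)
    define L where "L = - ln \<epsilon>"
    have LT: "L > T" using elim by (simp add: L_def)
    have K0: "K \<ge> 0" unfolding K_def by (rule Bochner_Integration.integral_nonneg) simp
    have c0: "X \<ge> 0" using a Vm0 K0 by (simp add: X_def)
    have c1: "Y \<ge> 0" using a Vm0 K0 by (simp add: Y_def)
    have Lpos: "L > 0" using LT c0 c1 unfolding T_def by linarith
    have uc: "continuous_on UNIV (u \<epsilon>)" using elim C2_cont unfolding admissible_def by blast
    have usol: "\<forall>x. u \<epsilon> x = a * (\<integral>y. ln (norm (x - y)) * (Vlow V \<epsilon> y * u \<epsilon> y + Vup V \<epsilon> y) \<partial>lborel)"
      using elim unfolding solves_eq_def a_def by blast
    have big: "2 * (a * Vm * K) \<le> L" using LT c0 c1 unfolding T_def X_def[symmetric] by linarith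
    have est: "\<bar>Lambda V \<tau> \<epsilon> (u \<epsilon>) * (1 + a) - a\<bar> \<le> 2 * a^2 * Vm * K * (\<bar>Lambda V \<tau> \<epsilon> (u \<epsilon>)\<bar> + 1) / L"
      by (rule main_est[OF V_nonneg Vc R Vsupp Vm V_int KI Kb a_def a _ _ uc usol L_def big])
         (use elim in auto)
    define \<delta> where "\<delta> = 2 * a^2 * Vm * K / L"
    have est': "\<bar>Lambda V \<tau> \<epsilon> (u \<epsilon>) * (1 + a) - a\<bar> \<le> \<delta> * (\<bar>Lambda V \<tau> \<epsilon> (u \<epsilon>)\<bar> + 1)"
      using est by (simp add: \<delta>_def)
    have d0: "\<delta> \<ge> 0" unfolding \<delta>_def using Lpos a Vm0 K0 by simp
    have "4 * a^2 * Vm * K \<le> a * L"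
    proof -
      have "4 * X \<le> L" using LT c0 c1 unfolding T_def by linarith
      then have "4 * a * Vm * K \<le> L" by (simp add: X_def mult_ac)
      from mult_left_mono[OF this, of a] a show ?thesis by (simp add: power2_eq_square mult_ac)
    qed
    then have d1: "\<delta> \<le> a / 2" unfolding \<delta>_def using Lpos by (simp add: field_simps)
    have "4 * Y \<le> L" using LT c0 c1 unfolding T_def by linarith
    then have "4 * a^2 * Vm * K \<le> L" by (simp add: Y_def mult_ac)
    then have d2: "\<delta> \<le> 1 / 2" unfolding \<delta>_def using Lpos by (simp add: field_simps)
    show ?case by (rule alg[OF est' a d0 d1 d2])
  qed
  show ?thesis
  proof
    show "\<forall>\<^sub>F \<epsilon> in at_right 0. Lambda V \<tau> \<epsilon> (u \<epsilon>) > 0" using main by (rule eventually_mono) simp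
    show "Limsup (at_right 0) (\<lambda>\<epsilon>. ereal (Lambda V \<tau> \<epsilon> (u \<epsilon>))) \<le> 1"
      by (rule Limsup_bounded) (use main in \<open>rule eventually_mono\<close>, simp)
  qed
qed

end
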